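(* Let $N$ be a positive even integer, $\alpha>0$, and let $\Phi:[0,1]^2\times(\mathbb{R}^2\setminus\{0\})\to\mathbb{R}$ be measurable in $x$, $C^3$ in $\xi$, and homogeneous of degree one in $\xi$ (i.e. $\Phi(x,\lambda\xi)=\lambda\Phi(x,\xi)$ for all $\lambda>0$). Define, with $\theta=\arg\xi$, $$C_k=2\pi\sup_{x\in[0,1]^2}\sup_{|\xi|=1}|\partial_\theta^k\Phi(x,\xi)|\quad(0\le k\le 3),\qquad D_2=C_0+C_2,\quad D_3=C_1+C_3,$$ assumed finite. Let $\hat\xi_\ell$ be a unit vector, and let $W_\ell$ be the set of $\xi$ in the square $[-\frac N2,\frac N2-1]^2$ whose angle with $\hat\xi_\ell$ is at most $\frac{\alpha}{\sqrt N}$ (a wedge of angular opening $\frac{2\alpha}{\sqrt N}$ centered on $\hat\xi_\ell$). Define the residual phase $\Phi_\ell(x,\xi)=\Phi(x,\xi)-\nabla_\xi\Phi(x,\hat\xi_\ell)\cdot\xi$. Then for all $0<\epsilon\le1$ and all $N\ge\frac{\alpha^6D_3^2}{18\epsilon^2}$, the $\epsilon$-separation rank $r_\epsilon$ of $e^{2\pi i\Phi_\ell(x,\xi)}$ for $x\in[0,1]^2$, $\xi\in W_\ell$ obeys $$r_\epsilon\le 1+\max\Big\{\frac{e\sqrt2}{2}\alpha^2D_2,\ \log_2(4\epsilon^{-1})\Big\}.$$ Furthermore, if in addition $\alpha\le\sqrt{\frac{\sqrt2}{eD_2}}$, then $$r_\epsilon\le 1+\frac{\log(4\epsilon^{-1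})}{\log\frac{2\sqrt2}{e\alpha^2D_2}}.$$
   Context: For a function $f(x,\xi)$ on a product domain $D_1\times D_2$ and $\epsilon>0$, the $\epsilon$-separation rank is the smallest integer $r_\epsilon$ for which there exist functions $c_n$ on $D_1$ and $d_n$ on $D_2$ ($0\le n\le r_\epsilon-1$) with $|f(x,\xi)-\sum_{n=0}^{r_\epsilon-1}c_n(x)d_n(\xi)|\le\epsilon$ for all $(x,\xi)\in D_1\times D_2$. $\log$ denotes the natural logarithm. *)

theory Defs
  imports "HOL-Analysis.Analysis"
begin

text \<open>k-times continuously differentiable real-valued functions on a set S
  (intended for open S): iterated Frechet derivatives, applied to arbitrary
  direction vectors, exist and are continuous.\<close>
fun Ck_on :: "nat \<Rightarrow> 'a::real_normed_vector set \<Rightarrow> ('a \<Rightarrow> real) \<Rightarrow> bool" where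
  "Ck_on 0 S f = continuous_on S f"
| "Ck_on (Suc k) S f =
     ((\<forall>y\<in>S. f differentiable (at y)) \<and>
      (\<forall>v. Ck_on k S (\<lambda>y. frechet_derivative f (at y) v)))"

definition dirvec :: "real \<Rightarrow> real^2" where
  "dirvec t = vector [cos t, sin t]"

definition Cconst :: "(real^2 \<Rightarrow> real^2 \<Rightarrow> real) \<Rightarrow> nat \<Rightarrow> real" where
  "Cconst Phi k = 2 * pi *
     (SUP p \<in> cbox (0::real^2) 1 \<times> (UNIV::real set).
        \<bar>(deriv ^^ k) (\<lambda>t. Phi (fst p) (dirvec t)) (snd p)\<bar>)"

definition sep_rank :: "real \<Rightarrow> ('a \<Rightarrow> 'b \<Rightarrow> complex) \<Rightarrow> 'a set \<Rightarrow> 'b set \<Rightarrow> nat" where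
  "sep_rank eps f D1 D2 = (LEAST r. \<exists>(c::nat \<Rightarrow> 'a \<Rightarrow> complex) (d::nat \<Rightarrow> 'b \<Rightarrow> complex).
       \<forall>x\<in>D1. \<forall>\<xi>\<in>D2. cmod (f x \<xi> - (\<Sum>n<r. c n x * d n \<xi>)) \<le> eps)"

definition wedge :: "nat \<Rightarrow> real \<Rightarrow> real^2 \<Rightarrow> (real^2) set" where
  "wedge N alpha u = {\<xi>. \<xi> \<in> cbox (\<chi> i. - real N / 2) (\<chi> i. real N / 2 - 1) \<and> \<xi> \<noteq> 0 \<and>
       arccos ((\<xi> \<bullet> u) / norm \<xi>) \<le> alpha / sqrt (real N)}"

definition resid_phase :: "(real^2 \<Rightarrow> real^2 \<Rightarrow> real) \<Rightarrow> real^2 \<Rightarrow> real^2 \<Rightarrow> real^2 \<Rightarrow> real" where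
  "resid_phase Phi u x \<xi> = Phi x \<xi> - frechet_derivative (Phi x) (at u) \<xi>"

end

theory Submission
  imports Defs "HOL-Probability.Characteristic_Functions"
begin

definition e1 :: "real^2" where "e1 = vector [1, 0]"
definition e2 :: "real^2" where "e2 = vector [0, 1]"
definition dvec :: "real \<Rightarrow> real^2" where "dvec t = vector [- sin t, cos t]"

lemma dirvec_alt: "dirvec t = cos t *\<^sub>R e1 + sin t *\<^sub>R e2"
  by (simp add: dirvec_def e1_def e2_def vec_eq_iff forall_2 vector_2)
lemma dvec_alt: "dvec t = (- sin t) *\<^sub>R e1 + cos t *\<^sub>R e2"
  by (simp add: dvec_def e1_def e2_def vec_eq_iff forall_2 vector_2)

lemma dirvec_has_derivative: "(dirvec has_derivative (\<lambda>s. s *\<^sub>R dvec t)) (at t)"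
  unfolding dirvec_alt[abs_def] dvec_alt
  by (auto intro!: derivative_eq_intros simp: algebra_simps)

lemma dirvec_nz: "dirvec t \<noteq> 0"
proof
  assume "dirvec t = 0"
  then have "cos t = 0" "sin t = 0" by (auto simp: dirvec_def vec_eq_iff forall_2 vector_2)
  then show False using sin_cos_squared_add[of t] by simp
qed

lemma lin_e12: "bounded_linear L \<Longrightarrow> L (a *\<^sub>R e1 + b *\<^sub>R e2) = a * L e1 + b * L e2"
  by (simp add: linear_add linear_scale bounded_linear.linear)

lemma dvec_lin: "bounded_linear L \<Longrightarrow> L (dvec t) = - sin t * L e1 + cos t * L e2"
  unfolding dvec_alt by (rule lin_e12)

lemma comp_dirvec_deriv:
  fixes f :: "real^2 \<Rightarrow> real"
  assumes "f differentiable (at (dirvec t))"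
  shows "((\<lambda>t. f (dirvec t)) has_real_derivative
     (- sin t * frechet_derivative f (at (dirvec t)) e1 + cos t * frechet_derivative f (at (dirvec t)) e2)) (at t)"
proof -
  let ?L = "frechet_derivative f (at (dirvec t))"
  have fd: "(f has_derivative ?L) (at (dirvec t))" using assms frechet_derivative_works by blast
  have bl: "bounded_linear ?L" using fd has_derivative_bounded_linear by blast
  have "((f \<circ> dirvec) has_derivative (?L \<circ> (\<lambda>s. s *\<^sub>R dvec t))) (at t)"
    by (rule diff_chain_at[OF dirvec_has_derivative fd])
  moreover have "(?L \<circ> (\<lambda>s. s *\<^sub>R dvec t)) = (\<lambda>s. s * ?L (dvec t))"
    by (simp add: o_def fun_eq_iff linear_scale[OF bounded_linear.linear[OF bl]])
  moreover have "(\<lambda>s. s * ?L (dvec t)) = (\<lambda>s. s * (- sin t * ?L e1 + cos t * ?L e2))"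
    by (simp only: dvec_lin[OF bl])
  ultimately have "((\<lambda>t. f (dirvec t)) has_derivative (\<lambda>s. s * (- sin t * ?L e1 + cos t * ?L e2))) (at t)"
    by (simp add: o_def del: minus_mult_left)
  moreover have "(\<lambda>s. s * (- sin t * ?L e1 + cos t * ?L e2)) = (*) (- sin t * ?L e1 + cos t * ?L e2)"
    by (rule ext) (rule mult.commute)
  ultimately show ?thesis
    by (simp only: has_field_derivative_def)
qed

lemma comp_dirvec_deriv':
  fixes f :: "real^2 \<Rightarrow> real"
  assumes "f differentiable (at (dirvec t))"
  shows "((\<lambda>t. f (dirvec t)) has_real_derivative frechet_derivative f (at (dirvec t)) (dvec t)) (at t)"
proof -
  have "bounded_linear (frechet_derivative f (at (dirvec t)))"
    using assms frechet_derivative_works has_derivative_bounded_linear by blast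
  then show ?thesis using comp_dirvec_deriv[OF assms] by (simp only: dvec_lin)
qed

lemma smooth_h:
  fixes f :: "real^2 \<Rightarrow> real"
  assumes "Ck_on 3 (- {0}) f"
  defines "h \<equiv> (\<lambda>t. f (dirvec t))"
  shows "(h has_real_derivative deriv h t) (at t)"
    and "(deriv h has_real_derivative deriv (deriv h) t) (at t)"
    and "(deriv (deriv h) has_real_derivative deriv (deriv (deriv h)) t) (at t)"
proof -
  define f1 where "f1 = (\<lambda>v y. frechet_derivative f (at y) v)"
  define f2 where "f2 = (\<lambda>v w y. frechet_derivative (f1 v) (at y) w)"
  have df: "f differentiable (at y)" if "y \<noteq> 0" for y
    using assms(1) that by (simp add: numeral_3_eq_3)
  have df1: "f1 v differentiable (at y)" if "y \<noteq> 0" for v y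
    using assms(1) that by (simp add: numeral_3_eq_3 f1_def)
  have df2: "f2 v w differentiable (at y)" if "y \<noteq> 0" for v w y
    using assms(1) that by (simp add: numeral_3_eq_3 f1_def f2_def)
  define H1 where "H1 t = - sin t * f1 e1 (dirvec t) + cos t * f1 e2 (dirvec t)" for t
  define H2 where "H2 t = - cos t * f1 e1 (dirvec t) - sin t * (- sin t * f2 e1 e1 (dirvec t) + cos t * f2 e1 e2 (dirvec t))
     - sin t * f1 e2 (dirvec t) + cos t * (- sin t * f2 e2 e1 (dirvec t) + cos t * f2 e2 e2 (dirvec t))" for t
  have D0: "(h has_real_derivative H1 t) (at t)" for t
    unfolding h_def H1_def f1_def using comp_dirvec_deriv[OF df[OF dirvec_nz]] .
  have Q1: "((\<lambda>t. f1 v (dirvec t)) has_real_derivative (- sin t * f2 v e1 (dirvec t) + cos t * f2 v e2 (dirvec t))) (at t)" for v t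
    unfolding f2_def using comp_dirvec_deriv[OF df1[OF dirvec_nz]] .
  have Q2: "((\<lambda>t. f2 v w (dirvec t)) has_real_derivative (- sin t * frechet_derivative (f2 v w) (at (dirvec t)) e1 + cos t * frechet_derivative (f2 v w) (at (dirvec t)) e2)) (at t)" for v w t
    using comp_dirvec_deriv[OF df2[OF dirvec_nz]] .
  have D1: "(H1 has_real_derivative H2 t) (at t)" for t
    unfolding H1_def H2_def
    by (rule derivative_eq_intros Q1 refl | simp)+
  have D2: "H2 differentiable (at t)" for t
    unfolding H2_def
    by (intro derivative_intros differentiableI[OF Q1[unfolded has_field_derivative_def]] differentiableI[OF Q2[unfolded has_field_derivative_def]]
      differentiableI[OF DERIV_sin[unfolded has_field_derivative_def]] differentiableI[OF DERIV_cos[unfolded has_field_derivative_def]])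
  have e0: "deriv h = H1" using D0 DERIV_imp_deriv by blast
  have e1': "deriv H1 = H2" using D1 DERIV_imp_deriv by blast
  show "(h has_real_derivative deriv h t) (at t)" using D0 e0 by simp
  show "(deriv h has_real_derivative deriv (deriv h) t) (at t)" using D1 e0 e1' by simp
  show "(deriv (deriv h) has_real_derivative deriv (deriv (deriv h)) t) (at t)"
    using D2 e0 e1' by (simp add: DERIV_deriv_iff_real_differentiable)
qed

lemma norm2: "norm (x::real^2) = sqrt ((x$1)^2 + (x$2)^2)"
  by (simp add: norm_vec_def L2_set_def UNIV_2 power2_eq_square)
lemma inner2: "inner (x::real^2) y = x$1 * y$1 + x$2 * y$2"
  by (simp add: inner_vec_def UNIV_2)

lemma euler:
  fixes f :: "real^2 \<Rightarrow> real"
  assumes hom: "\<And>y c. y \<noteq> 0 \<Longrightarrow> c > 0 \<Longrightarrow> f (c *\<^sub>R y) = c * f y"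
    and d: "f differentiable (at u)" and u: "u \<noteq> 0"
  shows "frechet_derivative f (at u) u = f u"
proof -
  let ?L = "frechet_derivative f (at u)"
  have fd: "(f has_derivative ?L) (at u)" using d frechet_derivative_works by blast
  have bl: "bounded_linear ?L" using fd has_derivative_bounded_linear by blast
  have g: "((\<lambda>c::real. c *\<^sub>R u) has_derivative (\<lambda>s. s *\<^sub>R u)) (at 1)"
    by (auto intro!: derivative_eq_intros)
  have "((f \<circ> (\<lambda>c::real. c *\<^sub>R u)) has_derivative (?L \<circ> (\<lambda>s. s *\<^sub>R u))) (at 1)"
    by (rule diff_chain_at[OF g]) (simp add: fd)
  moreover have "(?L \<circ> (\<lambda>s. s *\<^sub>R u)) = (*) (?L u)"
    by (auto simp: o_def fun_eq_iff linear_scale[OF bounded_linear.linear[OF bl]])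
  ultimately have D1: "((\<lambda>c. f (c *\<^sub>R u)) has_real_derivative ?L u) (at 1)"
    by (simp add: has_field_derivative_def o_def)
  have D2: "((\<lambda>c. c * f u) has_real_derivative f u) (at 1)"
    by (auto intro!: derivative_eq_intros)
  have D3: "((\<lambda>c. f (c *\<^sub>R u)) has_real_derivative f u) (at 1)"
    by (rule has_field_derivative_transform_within_open[OF D2, of "{0<..}"]) (auto simp: hom u)
  show ?thesis using DERIV_unique[OF D1 D3] .
qed

lemma wedge_polar:
  assumes u1: "norm u = 1" and ua: "u = dirvec a" and xz: "(\<xi>::real^2) \<noteq> 0"
  shows "\<exists>\<phi>. \<bar>\<phi>\<bar> = arccos ((\<xi> \<bullet> u) / norm \<xi>) \<and> \<xi> = norm \<xi> *\<^sub>R dirvec (a + \<phi>) \<and> \<bar>\<phi>\<bar> \<le> pi"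
proof -
  define \<rho> where "\<rho> = norm \<xi>"
  have rp: "\<rho> > 0" using xz \<rho>_def by simp
  define v1 where "v1 = \<xi>$1 / \<rho>"
  define v2 where "v2 = \<xi>$2 / \<rho>"
  have r2: "\<rho>^2 = (\<xi>$1)^2 + (\<xi>$2)^2" unfolding \<rho>_def norm2 by simp
  have "v1^2 + v2^2 = ((\<xi>$1)^2 + (\<xi>$2)^2) / \<rho>^2"
    by (simp add: v1_def v2_def power_divide add_divide_distrib)
  also have "\<dots> = 1" using rp r2 by (metis div_self less_irrefl power_not_zero)
  finally have vn: "v1^2 + v2^2 = 1" .
  have un: "(cos a)^2 + (sin a)^2 = 1" by simp
  define c where "c = v1 * cos a + v2 * sin a"
  define w where "w = v2 * cos a - v1 * sin a"
  have cw: "c^2 + w^2 = 1"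
  proof -
    have "c^2 + w^2 = (v1^2 + v2^2) * ((cos a)^2 + (sin a)^2)" unfolding c_def w_def by algebra
    then show ?thesis using vn by simp
  qed
  have cdef: "(\<xi> \<bullet> u) / norm \<xi> = c"
    using rp unfolding c_def v1_def v2_def inner2 ua \<rho>_def by (simp add: dirvec_def field_simps)
  have cb: "-1 \<le> c" "c \<le> 1"
  proof -
    have "c^2 \<le> 1" using cw by (smt (verit) zero_le_power2)
    then have "\<bar>c\<bar> \<le> 1" by (simp add: abs_square_le_1)
    then show "-1 \<le> c" "c \<le> 1" by auto
  qed
  define d where "d = arccos c"
  have cd: "cos d = c" using cb d_def by simp
  have sd: "sin d = \<bar>w\<bar>"
  proof -
    have "sin d = sqrt (1 - c^2)" using cb d_def by (simp add: sin_arccos)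
    also have "1 - c^2 = w^2" using cw by simp
    finally show ?thesis by simp
  qed
  define \<phi> where "\<phi> = (if w \<ge> 0 then d else - d)"
  have cp: "cos \<phi> = c" using cd by (simp add: \<phi>_def)
  have sp: "sin \<phi> = w" using sd by (simp add: \<phi>_def)
  have "\<xi> = \<rho> *\<^sub>R dirvec (a + \<phi>)"
  proof -
    have e1: "cos (a + \<phi>) = v1"
    proof -
      have "cos (a + \<phi>) = cos a * c - sin a * w" by (simp add: cos_add cp sp)
      also have "\<dots> = v1 * ((cos a)^2 + (sin a)^2)" unfolding c_def w_def by algebra
      finally show ?thesis by simp
    qed
    have e2: "sin (a + \<phi>) = v2"
    proof -
      have "sin (a + \<phi>) = sin a * c + cos a * w" by (simp add: sin_add cp sp)
      also have "\<dots> = v2 * ((cos a)^2 + (sin a)^2)" unfolding c_def w_def by algebra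
      finally show ?thesis by simp
    qed
    show ?thesis using rp
      by (simp add: vec_eq_iff forall_2 dirvec_def e1 e2 v1_def v2_def)
  qed
  moreover have "\<bar>\<phi>\<bar> = arccos ((\<xi> \<bullet> u) / norm \<xi>)"
    using cdef d_def arccos_bounded[OF cb] by (simp add: \<phi>_def)
  moreover have "\<bar>\<phi>\<bar> \<le> pi"
    using d_def arccos_bounded[OF cb] by (simp add: \<phi>_def)
  ultimately show ?thesis unfolding \<rho>_def by blast
qed

lemma taylor_circ:
  fixes h h1 h2 h3 :: "real \<Rightarrow> real"
  assumes d0: "\<And>t. (h has_real_derivative h1 t) (at t)"
    and d1: "\<And>t. (h1 has_real_derivative h2 t) (at t)"
    and d2: "\<And>t. (h2 has_real_derivative h3 t) (at t)"
    and K: "\<And>t. \<bar>h1 t + h3 t\<bar> \<le> K"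
    and del: "0 \<le> d" "d \<le> pi"
  shows "\<bar>h (a + d) - h a * cos d - h1 a * sin d - (h a + h2 a) * (1 - cos d)\<bar> \<le> K * (d - sin d)"
proof -
  define q where "q s = h s + h2 s" for s
  have dq: "(q has_real_derivative (h1 s + h3 s)) (at s)" for s
    unfolding q_def by (auto intro!: derivative_eq_intros d0 d2)
  have Kb: "h1 t + h3 t \<le> K" "- K \<le> h1 t + h3 t" for t using K[of t] by auto
  have qb: "\<bar>q s - q a\<bar> \<le> K * (s - a)" if "a \<le> s" for s
  proof -
    have "(\<lambda>s. K * s - q s) a \<le> (\<lambda>s. K * s - q s) s"
      apply (rule DERIV_nonneg_imp_nondecreasing[OF that])
      apply (rule exI[of _ "K - (h1 _ + h3 _)"])
      apply (auto intro!: derivative_eq_intros dq)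
      using Kb by (smt (verit))
    moreover have "(\<lambda>s. K * s + q s) a \<le> (\<lambda>s. K * s + q s) s"
      apply (rule DERIV_nonneg_imp_nondecreasing[OF that])
      apply (rule exI[of _ "K + (h1 _ + h3 _)"])
      apply (auto intro!: derivative_eq_intros dq)
      using Kb by (smt (verit))
    ultimately show ?thesis by (auto simp: algebra_simps abs_le_iff)
  qed
  define r where "r s = h s - h a * cos (s - a) - h1 a * sin (s - a) - q a * (1 - cos (s - a))" for s
  define r1 where "r1 s = h1 s - h1 a * cos (s - a) - h2 a * sin (s - a)" for s
  define r2 where "r2 s = h2 s + h1 a * sin (s - a) - h2 a * cos (s - a)" for s
  have dr: "(r has_real_derivative r1 s) (at s)" for s
    unfolding r_def r1_def q_def
    by (auto intro!: derivative_eq_intros d0 simp: algebra_simps)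
  have dr1: "(r1 has_real_derivative r2 s) (at s)" for s
    unfolding r2_def r1_def
    by (auto intro!: derivative_eq_intros d1 simp: algebra_simps)
  have rr: "r s + r2 s = q s - q a" for s
    unfolding r_def r2_def q_def by (simp add: algebra_simps)
  define b where "b = a + d"
  define G where "G s = r1 s * sin (b - s) + r s * cos (b - s)" for s
  define P where "P s = K * ((s - a) * cos (b - s) + sin (b - s))" for s
  have dG: "(G has_real_derivative (q s - q a) * sin (b - s)) (at s)" for s
    unfolding G_def
    apply (rule derivative_eq_intros dr dr1 refl | simp)+
    using rr[of s] by (simp add: algebra_simps) (metis distrib_right)
  have dP: "(P has_real_derivative K * ((s - a) * sin (b - s))) (at s)" for s
    unfolding P_def
    by (auto intro!: derivative_eq_intros simp: algebra_simps)
  have ab: "a \<le> b" using del b_def by simp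
  have key: "\<bar>(q s - q a) * sin (b - s)\<bar> \<le> K * ((s - a) * sin (b - s))" if "a \<le> s" "s \<le> b" for s
  proof -
    have sn: "0 \<le> sin (b - s)" using that del b_def by (intro sin_ge_zero) auto
    have "\<bar>(q s - q a) * sin (b - s)\<bar> = \<bar>q s - q a\<bar> * sin (b - s)" using sn by (simp add: abs_mult)
    also have "\<dots> \<le> K * (s - a) * sin (b - s)" using qb[OF that(1)] sn by (rule mult_right_mono)
    finally show ?thesis by simp
  qed
  have m1: "(\<lambda>s. P s - G s) a \<le> (\<lambda>s. P s - G s) b"
    apply (rule DERIV_nonneg_imp_nondecreasing[OF ab])
    apply (rule exI[of _ "K * ((_ - a) * sin (b - _)) - (q _ - q a) * sin (b - _)"])
    apply (auto intro!: derivative_eq_intros dP dG)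
    using key by (smt (verit))
  have m2: "(\<lambda>s. P s + G s) a \<le> (\<lambda>s. P s + G s) b"
    apply (rule DERIV_nonneg_imp_nondecreasing[OF ab])
    apply (rule exI[of _ "K * ((_ - a) * sin (b - _)) + (q _ - q a) * sin (b - _)"])
    apply (auto intro!: derivative_eq_intros dP dG)
    using key by (smt (verit))
  have Ga: "G a = 0" unfolding G_def r_def r1_def by simp
  have Gb: "G b = r b" unfolding G_def by simp
  have Pa: "P a = K * sin d" unfolding P_def b_def by simp
  have Pb: "P b = K * d" unfolding P_def b_def by simp
  have "\<bar>r b\<bar> \<le> K * (d - sin d)" using m1 m2 Ga Gb Pa Pb by (simp add: algebra_simps abs_le_iff)
  then show ?thesis unfolding r_def b_def q_def by simp
qed

lemma iexp_cis: "iexp x = cis x" by (simp add: cis_conv_exp)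

lemma cis_trunc: "r \<ge> 1 \<Longrightarrow> cmod (cis z - (\<Sum>k<r. (\<i> * complex_of_real z)^k / fact k)) \<le> \<bar>z\<bar>^r / fact r"
proof -
  assume "r \<ge> 1"
  then obtain n where n: "r = Suc n" by (cases r) auto
  have "{..<r} = {..n}" using n by auto
  then show ?thesis using iexp_approx1[of z n] n by (simp add: iexp_cis)
qed

lemma cis_lip: "cmod (cis a - cis b) \<le> \<bar>a - b\<bar>"
proof -
  have "cis a - cis b = cis b * (cis (a - b) - 1)" by (simp add: algebra_simps cis_mult)
  then have "cmod (cis a - cis b) = cmod (cis (a - b) - 1)" by (simp add: norm_mult)
  also have "\<dots> \<le> \<bar>a - b\<bar>" using iexp_approx1[of "a - b" 0] by (simp add: cis_conv_exp)
  finally show ?thesis .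
qed

lemma one_minus_cos_le: "(1::real) - cos d \<le> d^2 / 2"
proof -
  have "\<bar>Re (iexp d - (\<Sum>k\<le>1. (\<i> * d)^k / fact k))\<bar> \<le> \<bar>d\<bar>^2 / 2"
    using order_trans[OF abs_Re_le_cmod iexp_approx1[of d 1]] by (simp add: eval_nat_numeral)
  then show ?thesis by (simp add: iexp_cis)
qed

lemma sin_ge_cubic: "(d::real) - sin d \<le> \<bar>d\<bar>^3 / 6"
proof -
  have "\<bar>Im (iexp d - (\<Sum>k\<le>2. (\<i> * d)^k / fact k))\<bar> \<le> \<bar>d\<bar>^3 / 6"
    using order_trans[OF abs_Im_le_cmod iexp_approx1[of d 2]] by (simp add: eval_nat_numeral)
  then have "\<bar>sin d - d\<bar> \<le> \<bar>d\<bar>^3 / 6" by (simp add: iexp_cis eval_nat_numeral)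
  then show ?thesis by linarith
qed

lemma pow_le_exp_fact: "(real r)^r \<le> exp (real r) * fact r"
proof -
  have s: "summable (\<lambda>n. real r ^ n /\<^sub>R fact n)" using exp_converges sums_summable by blast
  have "sum (\<lambda>n. real r ^ n /\<^sub>R fact n) {r} \<le> suminf (\<lambda>n. real r ^ n /\<^sub>R fact n)"
    by (rule sum_le_suminf[OF s]) auto
  moreover have "suminf (\<lambda>n. real r ^ n /\<^sub>R fact n) = exp (real r)"
    using exp_converges sums_unique by metis
  ultimately have "real r ^ r / fact r \<le> exp (real r)"
    by (simp add: divide_inverse mult.commute)
  then show ?thesis by (simp add: divide_le_eq mult.commute)
qed

lemma taylor_circ2:
  fixes h h1 h2 h3 :: "real \<Rightarrow> real"
  assumes d0: "\<And>t. (h has_real_derivative h1 t) (at t)"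
    and d1: "\<And>t. (h1 has_real_derivative h2 t) (at t)"
    and d2: "\<And>t. (h2 has_real_derivative h3 t) (at t)"
    and K: "\<And>t. \<bar>h1 t + h3 t\<bar> \<le> K"
    and del: "\<bar>\<phi>\<bar> \<le> pi"
  shows "\<bar>h (a + \<phi>) - h a * cos \<phi> - h1 a * sin \<phi> - (h a + h2 a) * (1 - cos \<phi>)\<bar> \<le> K * (\<bar>\<phi>\<bar> - sin \<bar>\<phi>\<bar>)"
proof (cases "\<phi> \<ge> 0")
  case True
  then show ?thesis using taylor_circ[OF d0 d1 d2 K, of \<phi> a] del by simp
next
  case False
  have e0: "((\<lambda>t. h (- t)) has_real_derivative - h1 (- t)) (at t)" for t
    using DERIV_chain2[OF d0 DERIV_minus[OF DERIV_ident]] by simp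
  have e1: "((\<lambda>t. - h1 (- t)) has_real_derivative h2 (- t)) (at t)" for t
    using DERIV_minus[OF DERIV_chain2[OF d1 DERIV_minus[OF DERIV_ident]]] by simp
  have e2: "((\<lambda>t. h2 (- t)) has_real_derivative - h3 (- t)) (at t)" for t
    using DERIV_chain2[OF d2 DERIV_minus[OF DERIV_ident]] by simp
  have K': "\<bar>- h1 (- t) + - h3 (- t)\<bar> \<le> K" for t using K[of "- t"] by simp
  have "\<bar>h (- (- a + - \<phi>)) - h (- (- a)) * cos (- \<phi>) - - h1 (- (- a)) * sin (- \<phi>) - (h (- (- a)) + h2 (- (- a))) * (1 - cos (- \<phi>))\<bar>
        \<le> K * (- \<phi> - sin (- \<phi>))"
    using taylor_circ[OF e0 e1 e2 K', of "- \<phi>" "- a"] del False by simp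
  moreover have eq: "h (- (- a + - \<phi>)) = h (a + \<phi>)" by (rule arg_cong[where f=h]) simp
  ultimately have "\<bar>h (a + \<phi>) - h (- (- a)) * cos (- \<phi>) - - h1 (- (- a)) * sin (- \<phi>) - (h (- (- a)) + h2 (- (- a))) * (1 - cos (- \<phi>))\<bar>
        \<le> K * (- \<phi> - sin (- \<phi>))" by (simp only: eq)
  then show ?thesis using False by simp
qed

lemma nat_ceiling_le: "x \<ge> 0 \<Longrightarrow> real (nat \<lceil>x\<rceil>) \<le> 1 + x"
proof -
  assume "x \<ge> 0"
  then have "real (nat \<lceil>x\<rceil>) = real_of_int \<lceil>x\<rceil>" by simp
  also have "\<dots> \<le> x + 1" by (rule of_int_ceiling_le_add_one)
  finally show ?thesis by simp
qed

lemma part1: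
  fixes \<epsilon> M :: real
  assumes e: "0 < \<epsilon>" "\<epsilon> \<le> 1" and M: "M \<ge> 0"
  defines "r \<equiv> nat \<lceil>max (2 * exp 1 * M) (log 2 (4 / \<epsilon>))\<rceil>"
  shows "r \<ge> 1" "M^r / fact r \<le> \<epsilon> / 2" "real r \<le> 1 + max (2 * exp 1 * M) (log 2 (4 / \<epsilon>))"
proof -
  have l2: "log 2 (4 / \<epsilon>) \<ge> 2"
  proof -
    have "4 \<le> 4 / \<epsilon>" using e by (simp add: field_simps)
    moreover have "2 powr (2::real) = 4" by (simp add: powr_realpow[of 2 2, simplified])
    ultimately show ?thesis using e by (subst le_log_iff) auto
  qed
  have rge: "real r \<ge> max (2 * exp 1 * M) (log 2 (4 / \<epsilon>))" unfolding r_def by (rule real_nat_ceiling_ge)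
  then show "r \<ge> 1" using l2 by simp
  show "real r \<le> 1 + max (2 * exp 1 * M) (log 2 (4 / \<epsilon>))"
    unfolding r_def using l2 by (intro nat_ceiling_le) simp
  have rpos: "real r > 0" using rge l2 by simp
  have p2: "4 / \<epsilon> \<le> 2 ^ r"
  proof -
    have "4 / \<epsilon> = 2 powr (log 2 (4 / \<epsilon>))" using e by simp
    also have "\<dots> \<le> 2 powr (real r)" using rge by (intro powr_mono) auto
    also have "\<dots> = 2 ^ r" by (simp add: powr_realpow)
    finally show ?thesis .
  qed
  have "M^r / fact r \<le> (exp 1 * M / real r)^r"
  proof -
    have "M^r * (real r)^r \<le> M^r * (exp (real r) * fact r)"
      using pow_le_exp_fact[of r] M by (intro mult_left_mono) auto
    moreover have "exp (real r) = (exp 1)^r" by (simp add: exp_of_nat_mult[symmetric])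
    ultimately have "M^r * (real r)^r \<le> (exp 1 * M)^r * fact r" by (simp add: power_mult_distrib algebra_simps)
    then show ?thesis using rpos by (simp add: power_divide field_simps)
  qed
  also have "\<dots> \<le> (1/2)^r"
  proof (rule power_mono)
    show "exp 1 * M / real r \<le> 1/2" using rge rpos by (simp add: field_simps)
    show "0 \<le> exp 1 * M / real r" using M rpos by simp
  qed
  also have "\<dots> \<le> \<epsilon> / 4" using p2 e by (simp add: power_one_over field_simps)
  also have "\<dots> \<le> \<epsilon> / 2" using e by simp
  finally show "M^r / fact r \<le> \<epsilon> / 2" .
qed

lemma part2:
  fixes \<epsilon> M :: real
  assumes e: "0 < \<epsilon>" "\<epsilon> \<le> 1" and M: "M > 0" "exp 1 * M \<le> 1/2"
  defines "r \<equiv> nat \<lceil>ln (4 / \<epsilon>) / ln (1 / (exp 1 * M))\<rceil>"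
  shows "r \<ge> 1" "M^r / fact r \<le> \<epsilon> / 2" "real r \<le> 1 + ln (4 / \<epsilon>) / ln (1 / (exp 1 * M))"
proof -
  define y where "y = 1 / (exp 1 * M)"
  have y2: "y \<ge> 2" using M unfolding y_def by (simp add: field_simps)
  have lny: "ln y > 0" using y2 by simp
  have l4: "ln (4 / \<epsilon>) > 0" using e by (simp add: field_simps)
  have rge: "real r \<ge> ln (4 / \<epsilon>) / ln y" unfolding r_def y_def by (rule real_nat_ceiling_ge)
  have q: "ln (4 / \<epsilon>) / ln y > 0" using l4 lny by simp
  then show "r \<ge> 1" using rge by simp
  show "real r \<le> 1 + ln (4 / \<epsilon>) / ln (1 / (exp 1 * M))"
    using q unfolding r_def y_def by (intro nat_ceiling_le) simp
  have "ln (4 / \<epsilon>) \<le> real r * ln y" using rge lny by (simp add: field_simps)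
  also have "\<dots> = ln (y ^ r)" using y2 by (simp add: ln_realpow)
  finally have "4 / \<epsilon> \<le> y ^ r" using e y2 by (subst (asm) ln_le_cancel_iff) auto
  then have yr: "1 / y ^ r \<le> \<epsilon> / 4" using e y2 by (simp add: field_simps)
  have "M^r / fact r \<le> M^r" using M by (simp add: divide_le_eq mult_le_cancel_left1 less_imp_le)
  also have "\<dots> \<le> (exp 1 * M)^r" using M by (intro power_mono) auto
  also have "\<dots> = 1 / y ^ r" unfolding y_def by (simp add: power_one_over)
  also have "\<dots> \<le> \<epsilon> / 2" using yr e by simp
  finally show "M^r / fact r \<le> \<epsilon> / 2" .
qed

lemma funpow_deriv:
  "(deriv ^^ 0) g = g" "(deriv ^^ 1) g = deriv g" "(deriv ^^ 2) g = deriv (deriv g)"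
  "(deriv ^^ 3) g = deriv (deriv (deriv g))"
  by (simp_all add: numeral_3_eq_3 numeral_2_eq_2)

lemma Cbound:
  fixes \<Phi> :: "real^2 \<Rightarrow> real^2 \<Rightarrow> real"
  assumes finite_C: "\<And>k. k \<le> 3 \<Longrightarrow> bdd_above ((\<lambda>p. \<bar>(deriv ^^ k) (\<lambda>t. \<Phi> (fst p) (dirvec t)) (snd p)\<bar>)
                          ` (cbox (0::real^2) 1 \<times> (UNIV::real set)))"
    and x: "x \<in> cbox (0::real^2) 1" and k: "k \<le> 3"
  shows "2 * pi * \<bar>(deriv ^^ k) (\<lambda>t. \<Phi> x (dirvec t)) t\<bar> \<le> Cconst \<Phi> k"
proof -
  have "(\<lambda>p. \<bar>(deriv ^^ k) (\<lambda>t. \<Phi> (fst p) (dirvec t)) (snd p)\<bar>) (x, t)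
     \<le> (SUP p \<in> cbox (0::real^2) 1 \<times> (UNIV::real set). \<bar>(deriv ^^ k) (\<lambda>t. \<Phi> (fst p) (dirvec t)) (snd p)\<bar>)"
    by (rule cSUP_upper[OF _ finite_C[OF k]]) (use x in auto)
  then show ?thesis unfolding Cconst_def by simp
qed

lemma dirvec_add: "dirvec (a + \<phi>) = cos \<phi> *\<^sub>R dirvec a + sin \<phi> *\<^sub>R dvec a"
  by (simp add: dirvec_def dvec_def vec_eq_iff forall_2 cos_add sin_add algebra_simps)

lemma rank_le:
  assumes "\<forall>x\<in>D1. \<forall>\<xi>\<in>D2. cmod (f x \<xi> - (\<Sum>n<r. c n x * d n \<xi>)) \<le> eps"
  shows "sep_rank eps f D1 D2 \<le> r"
  unfolding sep_rank_def by (rule Least_le) (use assms in blast)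

lemma key:
  fixes N :: nat and \<alpha> :: real and \<Phi> :: "real^2 \<Rightarrow> real^2 \<Rightarrow> real" and u :: "real^2" and \<epsilon> M :: real
  defines "M \<equiv> (Cconst \<Phi> 0 + Cconst \<Phi> 2) * \<alpha>^2 / (2 * sqrt 2)"
  assumes N_pos: "N > 0"
    and alpha_pos: "\<alpha> > 0"
    and smooth: "\<And>x. x \<in> cbox (0::real^2) 1 \<Longrightarrow> Ck_on 3 (- {0}) (\<Phi> x)"
    and homog: "\<And>x \<xi> c. x \<in> cbox (0::real^2) 1 \<Longrightarrow> \<xi> \<noteq> 0 \<Longrightarrow> c > 0 \<Longrightarrow>
        \<Phi> x (c *\<^sub>R \<xi>) = c * \<Phi> x \<xi>"
    and finite_C: "\<And>k. k \<le> 3 \<Longrightarrow> bdd_above ((\<lambda>p. \<bar>(deriv ^^ k) (\<lambda>t. \<Phi> (fst p) (dirvec t)) (snd p)\<bar>)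
                          ` (cbox (0::real^2) 1 \<times> (UNIV::real set)))"
    and u_unit: "norm u = 1"
    and e: "0 < \<epsilon>"
    and NB: "real N \<ge> \<alpha>^6 * (Cconst \<Phi> 1 + Cconst \<Phi> 3)^2 / (18 * \<epsilon>^2)"
    and r: "r \<ge> 1" "M^r / fact r \<le> \<epsilon> / 2"
  shows "sep_rank \<epsilon> (\<lambda>x \<xi>. cis (2 * pi * resid_phase \<Phi> u x \<xi>)) (cbox (0::real^2) 1) (wedge N \<alpha> u) \<le> r"
proof -
  define D2 where "D2 = Cconst \<Phi> 0 + Cconst \<Phi> 2"
  define D3 where "D3 = Cconst \<Phi> 1 + Cconst \<Phi> 3"
  have x0: "(0::real^2) \<in> cbox 0 1" by (simp add: mem_box_cart)
  have Cnn: "Cconst \<Phi> k \<ge> 0" if "k \<le> 3" for k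
    using Cbound[OF finite_C x0 that, of 0] by (smt (verit) mult_nonneg_nonneg pi_ge_zero abs_ge_zero)
  have D3nn: "D3 \<ge> 0" unfolding D3_def using Cnn[of 1] Cnn[of 3] by simp
  have "(u$1)^2 + (u$2)^2 = 1" using u_unit unfolding norm2 by (metis real_sqrt_eq_1_iff)
  then obtain \<theta>0 where th: "u$1 = cos \<theta>0" "u$2 = sin \<theta>0" by (metis sincos_total_2pi)
  have u_eq: "u = dirvec \<theta>0" using th by (simp add: vec_eq_iff forall_2 dirvec_def)
  have unz: "u \<noteq> 0" using u_unit by auto
  define h where "h = (\<lambda>x t. \<Phi> x (dirvec t))"
  define A where "A x = 2 * pi * (h x \<theta>0 + deriv (deriv (h x)) \<theta>0)" for x
  define \<delta> where "\<delta> \<xi> = arccos ((\<xi> \<bullet> u) / norm \<xi>)" for \<xi>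
  define B where "B \<xi> = norm \<xi> * (1 - cos (\<delta> \<xi>))" for \<xi>
  have main: "\<bar>2 * pi * resid_phase \<Phi> u x \<xi> - A x * B \<xi>\<bar> \<le> \<epsilon> / 2 \<and> \<bar>A x * B \<xi>\<bar> \<le> M"
    if x: "x \<in> cbox 0 1" and xi: "\<xi> \<in> wedge N \<alpha> u" for x \<xi>
  proof -
    have hx: "h x = (\<lambda>t. \<Phi> x (dirvec t))" by (simp add: h_def)
    have d0: "(h x has_real_derivative deriv (h x) t) (at t)" for t
      unfolding hx by (rule smooth_h(1)[OF smooth[OF x]])
    have d1: "(deriv (h x) has_real_derivative deriv (deriv (h x)) t) (at t)" for t
      unfolding hx by (rule smooth_h(2)[OF smooth[OF x]])
    have d2: "(deriv (deriv (h x)) has_real_derivative deriv (deriv (deriv (h x))) t) (at t)" for t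
      unfolding hx by (rule smooth_h(3)[OF smooth[OF x]])
    define K where "K = D3 / (2 * pi)"
    have Kb: "\<bar>deriv (h x) t + deriv (deriv (deriv (h x))) t\<bar> \<le> K" for t
    proof -
      have "2 * pi * \<bar>deriv (h x) t\<bar> \<le> Cconst \<Phi> 1"
        using Cbound[OF finite_C x, of 1 t] by (simp add: funpow_deriv hx)
      moreover have "2 * pi * \<bar>deriv (deriv (deriv (h x))) t\<bar> \<le> Cconst \<Phi> 3"
        using Cbound[OF finite_C x, of 3 t] by (simp add: funpow_deriv hx)
      ultimately have "2 * pi * \<bar>deriv (h x) t + deriv (deriv (deriv (h x))) t\<bar> \<le> D3"
        unfolding D3_def by (smt (verit) abs_triangle_ineq distrib_left mult_left_mono pi_ge_zero)
      then show ?thesis unfolding K_def using pi_gt_zero by (simp add: field_simps)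
    qed
    have Knn: "K \<ge> 0" unfolding K_def using D3nn by simp
    have xinz: "\<xi> \<noteq> 0" and xibox: "\<xi> \<in> cbox (\<chi> i. - real N / 2) (\<chi> i. real N / 2 - 1)"
      and dle: "\<delta> \<xi> \<le> \<alpha> / sqrt (real N)"
      using xi unfolding wedge_def \<delta>_def by auto
    obtain \<phi> where ph: "\<bar>\<phi>\<bar> = \<delta> \<xi>" "\<xi> = norm \<xi> *\<^sub>R dirvec (\<theta>0 + \<phi>)" "\<bar>\<phi>\<bar> \<le> pi"
      using wedge_polar[OF u_unit u_eq xinz] unfolding \<delta>_def by blast
    define \<rho> where "\<rho> = norm \<xi>"
    have rp: "\<rho> > 0" using xinz \<rho>_def by simp
    define T where "T = h x (\<theta>0 + \<phi>) - h x \<theta>0 * cos \<phi> - deriv (h x) \<theta>0 * sin \<phi> - (h x \<theta>0 + deriv (deriv (h x)) \<theta>0) * (1 - cos \<phi>)"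
    have Tb: "\<bar>T\<bar> \<le> K * (\<bar>\<phi>\<bar> - sin \<bar>\<phi>\<bar>)"
      unfolding T_def by (rule taylor_circ2[OF d0 d1 d2 Kb ph(3)])
    also have "\<dots> \<le> K * (\<bar>\<phi>\<bar>^3 / 6)"
      using sin_ge_cubic[of "\<bar>\<phi>\<bar>"] Knn by (intro mult_left_mono) auto
    finally have Tb2: "\<bar>T\<bar> \<le> K * (\<delta> \<xi>^3 / 6)" using ph(1) by simp
    let ?L = "frechet_derivative (\<Phi> x) (at u)"
    have dfu: "\<Phi> x differentiable (at u)" using smooth[OF x] unz by (simp add: numeral_3_eq_3)
    have bl: "bounded_linear ?L" using dfu frechet_derivative_works has_derivative_bounded_linear by blast
    have Lu: "?L (dirvec \<theta>0) = h x \<theta>0"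
      using euler[of "\<Phi> x", OF homog[OF x] dfu unz] u_eq by (simp add: h_def)
    have Ld: "?L (dvec \<theta>0) = deriv (h x) \<theta>0"
      using DERIV_imp_deriv[OF comp_dirvec_deriv'[of "\<Phi> x" \<theta>0]] dfu u_eq by (simp add: h_def)
    have res: "resid_phase \<Phi> u x \<xi> = \<rho> * (h x (\<theta>0 + \<phi>) - cos \<phi> * h x \<theta>0 - sin \<phi> * deriv (h x) \<theta>0)"
    proof -
      have "\<Phi> x \<xi> = \<rho> * h x (\<theta>0 + \<phi>)"
        using homog[OF x dirvec_nz rp, of "\<theta>0 + \<phi>"] ph(2) unfolding \<rho>_def h_def by metis
      moreover have "?L \<xi> = \<rho> * (cos \<phi> * h x \<theta>0 + sin \<phi> * deriv (h x) \<theta>0)"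
      proof -
        have "?L \<xi> = ?L (\<rho> *\<^sub>R (cos \<phi> *\<^sub>R dirvec \<theta>0 + sin \<phi> *\<^sub>R dvec \<theta>0))"
          using ph(2) unfolding \<rho>_def dirvec_add by metis
        also have "\<dots> = \<rho> * (cos \<phi> * ?L (dirvec \<theta>0) + sin \<phi> * ?L (dvec \<theta>0))"
          using bounded_linear.linear[OF bl] by (simp add: linear_add linear_scale)
        finally show ?thesis using Lu Ld by simp
      qed
      ultimately show ?thesis unfolding resid_phase_def by (simp add: algebra_simps)
    qed
    have cphi: "cos \<phi> = cos (\<delta> \<xi>)" using ph(1) by (metis cos_abs_real)
    have E: "2 * pi * resid_phase \<Phi> u x \<xi> - A x * B \<xi> = 2 * pi * \<rho> * T"
      unfolding res A_def B_def T_def \<rho>_def[symmetric] cphi[symmetric] by (simp add: algebra_simps)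
    have dnn: "\<delta> \<xi> \<ge> 0" using ph(1) by simp
    have rho2: "\<rho>^2 \<le> real N ^ 2 / 2"
    proof -
      have b: "- real N / 2 \<le> \<xi>$i \<and> \<xi>$i \<le> real N / 2 - 1" for i
        using xibox by (simp add: mem_box_cart)
      have sq: "(\<xi>$i)^2 \<le> (real N / 2)^2" for i
        using b[of i] by (intro power2_le_iff_abs_le[THEN iffD2]) auto
      have "\<rho>^2 \<le> (real N / 2)^2 + (real N / 2)^2" unfolding \<rho>_def norm2
        using add_mono[OF sq[of 1] sq[of 2]] by simp
      then show ?thesis by (simp add: power_divide)
    qed
    have d2b: "\<delta> \<xi>^2 \<le> \<alpha>^2 / real N"
    proof -
      have "\<delta> \<xi>^2 \<le> (\<alpha> / sqrt (real N))^2" using dle dnn by (intro power_mono) auto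
      then show ?thesis using N_pos by (simp add: power_divide)
    qed
    have part_a: "\<bar>2 * pi * resid_phase \<Phi> u x \<xi> - A x * B \<xi>\<bar> \<le> \<epsilon> / 2"
    proof -
      have "\<bar>2 * pi * resid_phase \<Phi> u x \<xi> - A x * B \<xi>\<bar> = 2 * pi * \<rho> * \<bar>T\<bar>"
        unfolding E using rp by (simp add: abs_mult)
      also have "\<dots> \<le> 2 * pi * \<rho> * (K * (\<delta> \<xi>^3 / 6))"
        using Tb2 rp by (intro mult_left_mono) auto
      also have "\<dots> = \<rho> * D3 * \<delta> \<xi>^3 / 6" unfolding K_def using pi_gt_zero by (simp add: field_simps)
      also have "\<dots> \<le> \<epsilon> / 2"
      proof (rule power2_le_imp_le)
        show "0 \<le> \<epsilon> / 2" using e by simp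
        have "(\<rho> * D3 * \<delta> \<xi>^3 / 6)^2 = \<rho>^2 * D3^2 * (\<delta> \<xi>^2)^3 / 36"
          by (simp add: power_mult_distrib power_divide power_mult[symmetric] mult.commute)
        also have "\<dots> \<le> (real N^2 / 2) * D3^2 * (\<alpha>^2 / real N)^3 / 36"
          using rho2 d2b dnn D3nn by (intro divide_right_mono mult_mono power_mono) auto
        also have "\<dots> = \<alpha>^6 * D3^2 / (72 * real N)"
          using N_pos by (simp add: power_divide field_simps eval_nat_numeral)
        also have "\<dots> \<le> (\<epsilon> / 2)^2"
        proof -
          have "\<alpha>^6 * D3^2 \<le> real N * (18 * \<epsilon>^2)" using NB e unfolding D3_def by (simp add: field_simps)
          then show ?thesis using N_pos by (simp add: field_simps power_divide)
        qed
        finally show "(\<rho> * D3 * \<delta> \<xi>^3 / 6)^2 \<le> (\<epsilon> / 2)^2" .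
      qed
      finally show ?thesis .
    qed
    have part_b: "\<bar>A x * B \<xi>\<bar> \<le> M"
    proof -
      have Ab: "\<bar>A x\<bar> \<le> D2"
      proof -
        have "2 * pi * \<bar>h x \<theta>0\<bar> \<le> Cconst \<Phi> 0"
          using Cbound[OF finite_C x, of 0 \<theta>0] by (simp add: funpow_deriv hx)
        moreover have "2 * pi * \<bar>deriv (deriv (h x)) \<theta>0\<bar> \<le> Cconst \<Phi> 2"
          using Cbound[OF finite_C x, of 2 \<theta>0] by (simp add: funpow_deriv hx)
        ultimately show ?thesis unfolding A_def D2_def
          by (smt (verit) abs_triangle_ineq distrib_left mult_left_mono pi_ge_zero abs_mult abs_of_nonneg)
      qed
      have Bnn: "B \<xi> \<ge> 0" unfolding B_def using rp by simp
      have Bb: "B \<xi> \<le> \<rho> * \<delta> \<xi>^2 / 2"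
        unfolding B_def \<rho>_def[symmetric] using one_minus_cos_le[of "\<delta> \<xi>"] rp
        by (metis mult_left_mono less_imp_le times_divide_eq_right)
      have rd: "\<rho> * \<delta> \<xi>^2 \<le> \<alpha>^2 / sqrt 2"
      proof (rule power2_le_imp_le)
        show "0 \<le> \<alpha>^2 / sqrt 2" by simp
        have "(\<rho> * \<delta> \<xi>^2)^2 = \<rho>^2 * (\<delta> \<xi>^2)^2" by (simp add: power_mult_distrib)
        also have "\<dots> \<le> (real N^2 / 2) * (\<alpha>^2 / real N)^2"
          using rho2 d2b dnn by (intro mult_mono power_mono) auto
        also have "\<dots> = (\<alpha>^2 / sqrt 2)^2" using N_pos by (simp add: power_divide field_simps)
        finally show "(\<rho> * \<delta> \<xi>^2)^2 \<le> (\<alpha>^2 / sqrt 2)^2" .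
      qed
      have "B \<xi> \<le> (\<alpha>^2 / sqrt 2) / 2" using order_trans[OF Bb divide_right_mono[OF rd, of 2]] by simp
      then have Bb2: "B \<xi> \<le> \<alpha>^2 / (2 * sqrt 2)" by simp
      have "\<bar>A x * B \<xi>\<bar> = \<bar>A x\<bar> * B \<xi>" using Bnn by (simp add: abs_mult)
      also have "\<dots> \<le> D2 * (\<alpha>^2 / (2 * sqrt 2))"
        using Ab Bb2 Bnn by (intro mult_mono) auto
      also have "\<dots> = M" unfolding M_def D2_def by simp
      finally show ?thesis .
    qed
    show ?thesis using part_a part_b by simp
  qed
  define c where "c n x = (\<i> * complex_of_real (A x))^n / fact n" for n x
  define d where "d n \<xi> = (complex_of_real (B \<xi>))^n" for n \<xi>
  show ?thesis
  proof (rule rank_le[where c = c and d = d], intro ballI)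
    fix x \<xi> assume x: "x \<in> cbox (0::real^2) 1" and xi: "\<xi> \<in> wedge N \<alpha> u"
    have S: "(\<Sum>n<r. c n x * d n \<xi>) = (\<Sum>n<r. (\<i> * complex_of_real (A x * B \<xi>))^n / fact n)"
      unfolding c_def d_def by (simp add: power_mult_distrib mult.assoc)
    have "cmod (cis (2 * pi * resid_phase \<Phi> u x \<xi>) - (\<Sum>n<r. c n x * d n \<xi>))
        \<le> cmod (cis (2 * pi * resid_phase \<Phi> u x \<xi>) - cis (A x * B \<xi>))
          + cmod (cis (A x * B \<xi>) - (\<Sum>n<r. (\<i> * complex_of_real (A x * B \<xi>))^n / fact n))"
      unfolding S by (rule norm_diff_triangle_le[OF order_refl order_refl])
    also have "\<dots> \<le> \<epsilon> / 2 + M^r / fact r"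
    proof (rule add_mono)
      show "cmod (cis (2 * pi * resid_phase \<Phi> u x \<xi>) - cis (A x * B \<xi>)) \<le> \<epsilon> / 2"
        using cis_lip main[OF x xi] order_trans by blast
      have "cmod (cis (A x * B \<xi>) - (\<Sum>n<r. (\<i> * complex_of_real (A x * B \<xi>))^n / fact n))
           \<le> \<bar>A x * B \<xi>\<bar>^r / fact r" by (rule cis_trunc[OF r(1)])
      also have "\<dots> \<le> M^r / fact r"
        using main[OF x xi] by (intro divide_right_mono power_mono) auto
      finally show "cmod (cis (A x * B \<xi>) - (\<Sum>n<r. (\<i> * complex_of_real (A x * B \<xi>))^n / fact n)) \<le> M^r / fact r" .
    qed
    also have "\<dots> \<le> \<epsilon>" using r(2) by linarith
    finally show "cmod (cis (2 * pi * resid_phase \<Phi> u x \<xi>) - (\<Sum>n<r. c n x * d n \<xi>)) \<le> \<epsilon>" .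
  qed
qed

lemma sqrt2_half: "sqrt 2 / 2 = 1 / sqrt (2::real)"
  by (simp add: field_simps)

theorem theorem1:
  fixes N :: nat and \<alpha> :: real and \<Phi> :: "real^2 \<Rightarrow> real^2 \<Rightarrow> real" and u :: "real^2"
  assumes N_pos: "N > 0" and N_even: "even N"
    and alpha_pos: "\<alpha> > 0"
    and meas: "\<And>\<xi>. \<xi> \<noteq> 0 \<Longrightarrow>
        (\<lambda>x. \<Phi> x \<xi>) \<in> borel_measurable (restrict_space lebesgue (cbox (0::real^2) 1))"
    and smooth: "\<And>x. x \<in> cbox (0::real^2) 1 \<Longrightarrow> Ck_on 3 (- {0}) (\<Phi> x)"
    and homog: "\<And>x \<xi> c. x \<in> cbox (0::real^2) 1 \<Longrightarrow> \<xi> \<noteq> 0 \<Longrightarrow> c > 0 \<Longrightarrow>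
        \<Phi> x (c *\<^sub>R \<xi>) = c * \<Phi> x \<xi>"
    and finite_C: "\<And>k. k \<le> 3 \<Longrightarrow> bdd_above ((\<lambda>p. \<bar>(deriv ^^ k) (\<lambda>t. \<Phi> (fst p) (dirvec t)) (snd p)\<bar>)
                          ` (cbox (0::real^2) 1 \<times> (UNIV::real set)))"
    and u_unit: "norm u = 1"
  shows "\<forall>\<epsilon>::real. 0 < \<epsilon> \<and> \<epsilon> \<le> 1 \<and>
           real N \<ge> \<alpha>^6 * (Cconst \<Phi> 1 + Cconst \<Phi> 3)^2 / (18 * \<epsilon>^2) \<longrightarrow>
           (let r = real (sep_rank \<epsilon> (\<lambda>x \<xi>. cis (2 * pi * resid_phase \<Phi> u x \<xi>))
                                   (cbox (0::real^2) 1) (wedge N \<alpha> u));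
                D2 = Cconst \<Phi> 0 + Cconst \<Phi> 2
            in r \<le> 1 + max (exp 1 * sqrt 2 / 2 * \<alpha>^2 * D2) (log 2 (4 / \<epsilon>)) \<and>
               (\<alpha> \<le> sqrt (sqrt 2 / (exp 1 * D2)) \<longrightarrow>
                  r \<le> 1 + ln (4 / \<epsilon>) / ln (2 * sqrt 2 / (exp 1 * \<alpha>^2 * D2))))"
proof (intro allI impI)
  fix \<epsilon> :: real
  assume H: "0 < \<epsilon> \<and> \<epsilon> \<le> 1 \<and> real N \<ge> \<alpha>^6 * (Cconst \<Phi> 1 + Cconst \<Phi> 3)^2 / (18 * \<epsilon>^2)"
  then have e: "0 < \<epsilon>" "\<epsilon> \<le> 1" and NB: "real N \<ge> \<alpha>^6 * (Cconst \<Phi> 1 + Cconst \<Phi> 3)^2 / (18 * \<epsilon>^2)"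
    by auto
  define R where "R = real (sep_rank \<epsilon> (\<lambda>x \<xi>. cis (2 * pi * resid_phase \<Phi> u x \<xi>)) (cbox (0::real^2) 1) (wedge N \<alpha> u))"
  define D2 where "D2 = Cconst \<Phi> 0 + Cconst \<Phi> 2"
  define M where "M = D2 * \<alpha>^2 / (2 * sqrt 2)"
  have x0: "(0::real^2) \<in> cbox 0 1" by (simp add: mem_box_cart)
  have Cnn: "Cconst \<Phi> k \<ge> 0" if "k \<le> 3" for k
    using Cbound[OF finite_C x0 that, of 0] by (smt (verit) mult_nonneg_nonneg pi_ge_zero abs_ge_zero)
  have D2nn: "D2 \<ge> 0" unfolding D2_def using Cnn[of 0] Cnn[of 2] by simp
  have Mnn: "M \<ge> 0" unfolding M_def using D2nn by simp
  have keyr: "R \<le> real r" if "r \<ge> 1" "M^r / fact r \<le> \<epsilon> / 2" for r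
    using key[OF N_pos alpha_pos smooth homog finite_C u_unit e(1) NB, of r] that
    unfolding R_def M_def D2_def by simp
  have Y: "exp 1 * sqrt 2 / 2 * \<alpha>^2 * D2 = 2 * exp 1 * M"
    unfolding M_def by (simp add: sqrt2_half field_simps)
  have c1: "R \<le> 1 + max (exp 1 * sqrt 2 / 2 * \<alpha>^2 * D2) (log 2 (4 / \<epsilon>))"
    unfolding Y using part1[OF e Mnn] keyr order_trans by blast
  have c2: "R \<le> 1 + ln (4 / \<epsilon>) / ln (2 * sqrt 2 / (exp 1 * \<alpha>^2 * D2))"
    if A: "\<alpha> \<le> sqrt (sqrt 2 / (exp 1 * D2))"
  proof -
    have D2p: "D2 > 0"
    proof (rule ccontr)
      assume "\<not> D2 > 0"
      then have "D2 = 0" using D2nn by simp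
      then show False using A alpha_pos by simp
    qed
    have "\<alpha>^2 \<le> sqrt 2 / (exp 1 * D2)"
      using power_mono[OF A, of 2] alpha_pos D2p by (simp add: real_sqrt_pow2)
    then have a2: "\<alpha>^2 * (exp 1 * D2) \<le> sqrt 2" using D2p by (simp add: field_simps)
    have Mp: "M > 0" unfolding M_def using D2p alpha_pos by simp
    have eM: "exp 1 * M \<le> 1/2" unfolding M_def using a2 by (simp add: field_simps)
    have eq: "1 / (exp 1 * M) = 2 * sqrt 2 / (exp 1 * \<alpha>^2 * D2)" unfolding M_def by (simp add: field_simps)
    show ?thesis using part2[OF e Mp eM] keyr order_trans unfolding eq by blast
  qed
  show "let r = real (sep_rank \<epsilon> (\<lambda>x \<xi>. cis (2 * pi * resid_phase \<Phi> u x \<xi>))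
                                   (cbox (0::real^2) 1) (wedge N \<alpha> u));
                D2 = Cconst \<Phi> 0 + Cconst \<Phi> 2
            in r \<le> 1 + max (exp 1 * sqrt 2 / 2 * \<alpha>^2 * D2) (log 2 (4 / \<epsilon>)) \<and>
               (\<alpha> \<le> sqrt (sqrt 2 / (exp 1 * D2)) \<longrightarrow>
                  r \<le> 1 + ln (4 / \<epsilon>) / ln (2 * sqrt 2 / (exp 1 * \<alpha>^2 * D2)))"
    unfolding Let_def R_def[symmetric] D2_def[symmetric] using c1 c2 by blast
qed

end
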